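(* Let $\{p_1,p_2,p_3\}=\mathcal{F}\subseteq\mathcal{O}$ be a normal family of three objects. Then at most $2$ faces of $G$ are type-$1$ singular faces for $\mathcal{F}$.
   Context: $G$ is a simple triangulated graph embedded on a sphere (every face is bounded by a triangle), with positive edge weights; $\mathrm{dist}(X,Y)$ denotes the minimum weight of a path between a vertex of $X$ and a vertex of $Y$. Each object $p$ has a location $\mathrm{loc}(p)$, a nonempty vertex set inducing a connected subgraph, and a radius $\mathrm{rad}(p)\ge 0$. A family $\mathcal{F}$ is normal if locations of its members are pairwise disjoint and $\mathrm{dist}(\mathrm{loc}(p_1),\mathrm{loc}(p_2))>\mathrm{rad}(p_1)-\mathrm{rad}(p_2)$ for all ordered pairs of distinct $p_1,p_2\in\mathcal{F}$. Standing assumption: all values $\mathrm{dist}(u,v)$ and $\mathrm{dist}(u,v)-\mathrm{rad}(p)$ are pairwise different and shortest paths are unique. The Voronoi partition $(M_p)_{p\in\mathcal{F}}$ assigns $v$ to $M_{p_0}$ iff $\mathrm{dist}(v,\mathrm{loc}(p_0))-\mathrm{rad}(p_0)$ is minimum over $p\in\mathcal{F}$. Regions $M_{p}$ and $M_{p'}$ ($p\ne p'$) meet at a face $f$ if the boundary of $f$ contains a vertex of $M_p$ and a vertex of $M_{p'}$. A face $f$ is a type-$1$ singular face for $\mathcal{F}$ if there are three distinct objects of $\mathcal{F}$ whose Voronoi regions pairwise meet at $f$. *)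

theory Defs
  imports Complex_Main
begin

definition gpath :: "'v set \<Rightarrow> 'v set set \<Rightarrow> 'v list \<Rightarrow> bool" where
  "gpath V E xs \<longleftrightarrow> xs \<noteq> [] \<and> distinct xs \<and> set xs \<subseteq> V \<and>
     (\<forall>i < length xs - 1. {xs ! i, xs ! Suc i} \<in> E)"

definition pweight :: "('v set \<Rightarrow> real) \<Rightarrow> 'v list \<Rightarrow> real" where
  "pweight w xs = (\<Sum>i < length xs - 1. w {xs ! i, xs ! Suc i})"

definition gdist :: "'v set \<Rightarrow> 'v set set \<Rightarrow> ('v set \<Rightarrow> real) \<Rightarrow> 'v \<Rightarrow> 'v \<Rightarrow> real" where
  "gdist V E w u v = Min {pweight w xs | xs. gpath V E xs \<and> hd xs = u \<and> last xs = v}"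

definition setdist :: "'v set \<Rightarrow> 'v set set \<Rightarrow> ('v set \<Rightarrow> real) \<Rightarrow> 'v set \<Rightarrow> 'v set \<Rightarrow> real" where
  "setdist V E w X Y = Min {gdist V E w u v | u v. u \<in> X \<and> v \<in> Y}"

definition induced_connected :: "'v set set \<Rightarrow> 'v set \<Rightarrow> bool" where
  "induced_connected E S \<longleftrightarrow>
     (\<forall>u\<in>S. \<forall>v\<in>S. \<exists>xs. gpath S E xs \<and> hd xs = u \<and> last xs = v)"

text \<open>Fc is the set of faces of the embedded graph, tri f the vertex set of the triangle
  bounding face f.  Conditions: simple graph; every face bounded by a triangle of G;
  every edge lies on exactly two faces; around each vertex the incident faces form a single
  cycle (faces adjacent when they share an edge through the vertex); connected; Euler
  characteristic 2.  These are exactly the triangulations of the 2-sphere.\<close>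

definition faces_at :: "'f set \<Rightarrow> ('f \<Rightarrow> 'v set) \<Rightarrow> 'v \<Rightarrow> 'f set" where
  "faces_at Fc tri v = {f \<in> Fc. v \<in> tri f}"

definition adj_at :: "'f set \<Rightarrow> ('f \<Rightarrow> 'v set) \<Rightarrow> 'v \<Rightarrow> 'f \<Rightarrow> 'f \<Rightarrow> bool" where
  "adj_at Fc tri v f g \<longleftrightarrow> f \<in> faces_at Fc tri v \<and> g \<in> faces_at Fc tri v \<and> f \<noteq> g \<and>
     (\<exists>a. a \<noteq> v \<and> a \<in> tri f \<and> a \<in> tri g)"

definition sphere_triangulation ::
  "'v set \<Rightarrow> 'v set set \<Rightarrow> 'f set \<Rightarrow> ('f \<Rightarrow> 'v set) \<Rightarrow> bool" where
  "sphere_triangulation V E Fc tri \<longleftrightarrow>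
     finite V \<and> finite Fc \<and> card V \<ge> 3 \<and>
     (\<forall>e\<in>E. e \<subseteq> V \<and> card e = 2) \<and>
     (\<forall>f\<in>Fc. tri f \<subseteq> V \<and> card (tri f) = 3 \<and>
        (\<forall>a\<in>tri f. \<forall>b\<in>tri f. a \<noteq> b \<longrightarrow> {a, b} \<in> E)) \<and>
     (\<forall>e\<in>E. card {f \<in> Fc. e \<subseteq> tri f} = 2) \<and>
     (\<forall>v\<in>V. \<forall>f\<in>faces_at Fc tri v. \<forall>g\<in>faces_at Fc tri v. (adj_at Fc tri v)\<^sup>*\<^sup>* f g) \<and>
     induced_connected E V \<and>
     int (card V) - int (card E) + int (card Fc) = 2"

definition is_object :: "'v set \<Rightarrow> 'v set set \<Rightarrow> ('o \<Rightarrow> 'v set) \<Rightarrow> ('o \<Rightarrow> real) \<Rightarrow> 'o \<Rightarrow> bool" where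
  "is_object V E loc rad p \<longleftrightarrow>
     loc p \<noteq> {} \<and> loc p \<subseteq> V \<and> induced_connected E (loc p) \<and> rad p \<ge> 0"

definition normal_family ::
  "'v set \<Rightarrow> 'v set set \<Rightarrow> ('v set \<Rightarrow> real) \<Rightarrow> ('o \<Rightarrow> 'v set) \<Rightarrow> ('o \<Rightarrow> real) \<Rightarrow> 'o set \<Rightarrow> bool" where
  "normal_family V E w loc rad F \<longleftrightarrow>
     (\<forall>p1\<in>F. \<forall>p2\<in>F. p1 \<noteq> p2 \<longrightarrow>
        loc p1 \<inter> loc p2 = {} \<and> setdist V E w (loc p1) (loc p2) > rad p1 - rad p2)"

definition standing_assumption ::
  "'v set \<Rightarrow> 'v set set \<Rightarrow> ('v set \<Rightarrow> real) \<Rightarrow> ('o \<Rightarrow> real) \<Rightarrow> 'o set \<Rightarrow> bool" where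
  "standing_assumption V E w rad F \<longleftrightarrow>
     (\<forall>u\<in>V. \<forall>v\<in>V. \<forall>u'\<in>V. \<forall>v'\<in>V.
        gdist V E w u v = gdist V E w u' v' \<longrightarrow>
          ({u, v} = {u', v'} \<or> (u = v \<and> u' = v'))) \<and>
     (\<forall>u\<in>V. \<forall>v\<in>V. \<forall>u'\<in>V. \<forall>v'\<in>V. \<forall>p\<in>F. \<forall>p'\<in>F.
        gdist V E w u v - rad p = gdist V E w u' v' - rad p' \<longrightarrow>
          (rad p = rad p' \<and> ({u, v} = {u', v'} \<or> (u = v \<and> u' = v')))) \<and>
     (\<forall>u\<in>V. \<forall>v\<in>V. \<exists>!xs. gpath V E xs \<and> hd xs = u \<and> last xs = v \<and>
        pweight w xs = gdist V E w u v)"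

definition voronoi ::
  "'v set \<Rightarrow> 'v set set \<Rightarrow> ('v set \<Rightarrow> real) \<Rightarrow> ('o \<Rightarrow> 'v set) \<Rightarrow> ('o \<Rightarrow> real) \<Rightarrow> 'o set \<Rightarrow> 'o \<Rightarrow> 'v set" where
  "voronoi V E w loc rad F p0 = {v \<in> V. \<forall>p\<in>F.
      setdist V E w {v} (loc p0) - rad p0 \<le> setdist V E w {v} (loc p) - rad p}"

definition meet_at ::
  "'v set \<Rightarrow> 'v set set \<Rightarrow> ('v set \<Rightarrow> real) \<Rightarrow> ('o \<Rightarrow> 'v set) \<Rightarrow> ('o \<Rightarrow> real) \<Rightarrow> 'o set \<Rightarrow>
   ('f \<Rightarrow> 'v set) \<Rightarrow> 'o \<Rightarrow> 'o \<Rightarrow> 'f \<Rightarrow> bool" where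
  "meet_at V E w loc rad F tri p p' f \<longleftrightarrow>
     (\<exists>a\<in>tri f. a \<in> voronoi V E w loc rad F p) \<and> (\<exists>b\<in>tri f. b \<in> voronoi V E w loc rad F p')"

definition type1_singular ::
  "'v set \<Rightarrow> 'v set set \<Rightarrow> ('v set \<Rightarrow> real) \<Rightarrow> ('o \<Rightarrow> 'v set) \<Rightarrow> ('o \<Rightarrow> real) \<Rightarrow> 'o set \<Rightarrow>
   ('f \<Rightarrow> 'v set) \<Rightarrow> 'f \<Rightarrow> bool" where
  "type1_singular V E w loc rad F tri f \<longleftrightarrow>
     (\<exists>q1\<in>F. \<exists>q2\<in>F. \<exists>q3\<in>F. q1 \<noteq> q2 \<and> q1 \<noteq> q3 \<and> q2 \<noteq> q3 \<and>
        meet_at V E w loc rad F tri q1 q2 f \<and> meet_at V E w loc rad F tri q1 q3 f \<and>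
        meet_at V E w loc rad F tri q2 q3 f)"

end

theory Submission
  imports Defs
begin


fun walk :: "'v set \<Rightarrow> 'v set set \<Rightarrow> 'v list \<Rightarrow> bool" where
  "walk V E [] = False"
| "walk V E [a] = (a \<in> V)"
| "walk V E (a # b # xs) = (a \<in> V \<and> {a,b} \<in> E \<and> walk V E (b # xs))"

fun wt :: "('v set \<Rightarrow> real) \<Rightarrow> 'v list \<Rightarrow> real" where
  "wt w (a # b # xs) = w {a,b} + wt w (b # xs)"
| "wt w _ = 0"

lemma all_less_Suc_split: "(\<forall>i<Suc n. P i) \<longleftrightarrow> P 0 \<and> (\<forall>i<n. P (Suc i))"
  by (auto simp: less_Suc_eq_0_disj)

lemma gpath_iff: "gpath V E xs \<longleftrightarrow> walk V E xs \<and> distinct xs"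
proof (induction xs rule: walk.induct)
  case (1 V E) then show ?case by (simp add: gpath_def)
next
  case (2 V E a) then show ?case by (simp add: gpath_def)
next
  case (3 V E a b xs)
  have "gpath V E (a # b # xs) \<longleftrightarrow> a \<in> V \<and> {a,b} \<in> E \<and> a \<notin> set (b#xs) \<and> gpath V E (b # xs)"
    unfolding gpath_def by (simp add: all_less_Suc_split) blast
  then show ?case using 3 by auto
qed

lemma pweight_wt: "pweight w xs = wt w xs"
proof (induction w xs rule: wt.induct)
  case (1 w a b xs)
  have "pweight w (a # b # xs) = w {a,b} + pweight w (b # xs)"
    unfolding pweight_def length_Cons diff_Suc_1 by (subst sum.lessThan_Suc_shift) simp
  then show ?case using 1 by simp
next
  case ("2_1" w) then show ?case by (simp add: pweight_def)
next
  case ("2_2" w v) then show ?case by (simp add: pweight_def)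
qed

lemma walk_Cons: "xs \<noteq> [] \<Longrightarrow> walk V E (a # xs) \<longleftrightarrow> a \<in> V \<and> {a, hd xs} \<in> E \<and> walk V E xs"
  by (cases xs) auto

lemma wt_Cons: "xs \<noteq> [] \<Longrightarrow> wt w (a # xs) = w {a, hd xs} + wt w xs"
  by (cases xs) auto

lemma walk_append: "xs \<noteq> [] \<Longrightarrow> ys \<noteq> [] \<Longrightarrow>
   walk V E (xs @ ys) \<longleftrightarrow> walk V E xs \<and> walk V E ys \<and> {last xs, hd ys} \<in> E"
proof (induction xs)
  case Nil then show ?case by simp
next
  case (Cons a xs)
  show ?case
  proof (cases "xs = []")
    case True then show ?thesis using Cons by (auto simp: walk_Cons)
  next
    case False then show ?thesis using Cons by (auto simp: walk_Cons) 
  qed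
qed

lemma wt_append: "xs \<noteq> [] \<Longrightarrow> ys \<noteq> [] \<Longrightarrow>
   wt w (xs @ ys) = wt w xs + w {last xs, hd ys} + wt w ys"
proof (induction xs)
  case Nil then show ?case by simp
next
  case (Cons a xs)
  show ?case
  proof (cases "xs = []")
    case True then show ?thesis using Cons by (simp add: wt_Cons)
  next
    case False then show ?thesis using Cons by (simp add: wt_Cons) 
  qed
qed

lemma wt_split: "wt w (ys @ x # zs) = wt w (ys @ [x]) + wt w (x # zs)"
proof (cases "ys = []")
  case True then show ?thesis by simp
next
  case False
  then have "wt w (ys @ [x] @ zs) = wt w (ys @ [x]) + wt w (x # zs)"
  proof (cases "zs = []")
    case True then show ?thesis by simp
  next
    case False2: False
    have "wt w ((ys @ [x]) @ zs) = wt w (ys @ [x]) + w {x, hd zs} + wt w zs"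
      using wt_append[of "ys @ [x]" zs w] False2 by simp
    then show ?thesis using wt_Cons[OF False2, of w x] by simp
  qed
  then show ?thesis by simp
qed

lemma walk_rev: "walk V E (rev xs) \<longleftrightarrow> walk V E xs"
proof (induction xs)
  case Nil then show ?case by simp
next
  case (Cons a xs)
  show ?case
  proof (cases "xs = []")
    case True then show ?thesis by simp
  next
    case False
    then have "walk V E (rev xs @ [a]) \<longleftrightarrow> walk V E (rev xs) \<and> walk V E [a] \<and> {last (rev xs), a} \<in> E"
      using walk_append[of "rev xs" "[a]"] by simp
    then show ?thesis using Cons False by (auto simp: walk_Cons last_rev insert_commute)
  qed
qed

lemma wt_rev: "wt w (rev xs) = wt w xs"
proof (induction xs)
  case Nil then show ?case by simp
next
  case (Cons a xs)
  show ?case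
  proof (cases "xs = []")
    case True then show ?thesis by simp
  next
    case False
    then have "wt w (rev xs @ [a]) = wt w (rev xs) + w {last (rev xs), a} + wt w [a]"
      using wt_append[of "rev xs" "[a]"] by simp
    then show ?thesis using Cons False by (auto simp: wt_Cons last_rev insert_commute)
  qed
qed

lemma wt_nonneg: "walk V E xs \<Longrightarrow> \<forall>e\<in>E. w e > 0 \<Longrightarrow> wt w xs \<ge> 0"
proof (induction xs rule: walk.induct)
  case (3 V E a b xs)
  then show ?case by (simp add: add_nonneg_nonneg less_imp_le)
qed auto

lemma walk_suffix: "walk V E (us @ vs) \<Longrightarrow> vs \<noteq> [] \<Longrightarrow> walk V E vs"
  by (cases "us = []") (auto simp: walk_append)

lemma walk_prefix: "walk V E (us @ vs) \<Longrightarrow> us \<noteq> [] \<Longrightarrow> walk V E us"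
  by (cases "vs = []") (auto simp: walk_append)

lemma walk_ne: "walk V E xs \<Longrightarrow> xs \<noteq> []"
  by (cases xs) auto

lemma walk_set: "walk V E xs \<Longrightarrow> set xs \<subseteq> V"
  by (induction xs rule: walk.induct) auto

lemma shortcut:
  assumes "walk V E xs" "\<forall>e\<in>E. w e > 0"
  shows "\<exists>ys. walk V E ys \<and> distinct ys \<and> hd ys = hd xs \<and> last ys = last xs \<and> wt w ys \<le> wt w xs"
  using assms(1)
proof (induction xs)
  case Nil then show ?case by simp
next
  case (Cons a xs)
  show ?case
  proof (cases "xs = []")
    case True then show ?thesis using Cons by (intro exI[of _ "[a]"]) auto
  next
    case False
    have wa: "a \<in> V" "{a, hd xs} \<in> E" "walk V E xs" using Cons.prems False by (auto simp: walk_Cons)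
    obtain ys where ys: "walk V E ys" "distinct ys" "hd ys = hd xs" "last ys = last xs" "wt w ys \<le> wt w xs"
      using Cons.IH wa(3) by blast
    have yne: "ys \<noteq> []" using ys(1) by (cases ys) auto
    have wpos: "w {a, hd xs} > 0" using wa(2) assms(2) by blast
    have wtc: "wt w (a # xs) = w {a, hd xs} + wt w xs" using wt_Cons[OF False] .
    show ?thesis
    proof (cases "a \<in> set ys")
      case False2: False
      show ?thesis
        apply (intro exI[of _ "a # ys"])
        using ys yne False2 wa wpos wtc False by (auto simp: walk_Cons wt_Cons)
    next
      case True
      then obtain us vs where uv: "ys = us @ a # vs" by (meson split_list)
      have "walk V E (a # vs)" using walk_suffix[of V E us "a # vs"] ys(1) uv by simp
      moreover have "distinct (a # vs)" using ys(2) uv by simp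
      moreover have "last (a # vs) = last xs" using ys(4) uv by simp
      moreover have "wt w (a # vs) \<le> wt w (a # xs)"
      proof -
        have "walk V E (us @ [a])" using walk_prefix[of V E "us @ [a]" vs] ys(1) uv by simp
        then have "wt w (us @ [a]) \<ge> 0" using wt_nonneg assms(2) by blast
        then have "wt w (a # vs) \<le> wt w ys" using wt_split[of w us a vs] uv by simp
        then show ?thesis using ys(5) wtc wpos by simp
      qed
      ultimately show ?thesis using False by (intro exI[of _ "a # vs"]) auto
    qed
  qed
qed



definition PS :: "'v set \<Rightarrow> 'v set set \<Rightarrow> 'v \<Rightarrow> 'v \<Rightarrow> 'v list set" where
  "PS V E u v = {xs. walk V E xs \<and> distinct xs \<and> hd xs = u \<and> last xs = v}"

lemma gdist_alt: "gdist V E w u v = Min (wt w ` PS V E u v)"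
proof -
  have "{pweight w xs | xs. gpath V E xs \<and> hd xs = u \<and> last xs = v} = wt w ` PS V E u v"
    by (auto simp: PS_def gpath_iff pweight_wt)
  then show ?thesis unfolding gdist_def by simp
qed

lemma PS_finite: "finite V \<Longrightarrow> finite (PS V E u v)"
  by (rule finite_subset[OF _ finite_subset_distinct[of V]]) (auto simp: PS_def dest: walk_set)

lemma PS_nonempty:
  assumes "induced_connected E V" "u \<in> V" "v \<in> V"
  shows "PS V E u v \<noteq> {}"
  using assms unfolding induced_connected_def PS_def by (auto simp: gpath_iff)

lemma gd_le_walk:
  assumes "finite V" "\<forall>e\<in>E. w e > 0" "walk V E xs"
  shows "gdist V E w (hd xs) (last xs) \<le> wt w xs"
proof -
  obtain ys where ys: "walk V E ys" "distinct ys" "hd ys = hd xs" "last ys = last xs" "wt w ys \<le> wt w xs"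
    using shortcut[OF assms(3,2)] by blast
  have "ys \<in> PS V E (hd xs) (last xs)" using ys by (simp add: PS_def)
  then have "Min (wt w ` PS V E (hd xs) (last xs)) \<le> wt w ys"
    using PS_finite[OF assms(1)] by (intro Min_le) auto
  then show ?thesis using ys(5) by (simp add: gdist_alt)
qed

lemma gd_path:
  assumes "finite V" "induced_connected E V" "u \<in> V" "v \<in> V"
  shows "\<exists>xs. walk V E xs \<and> distinct xs \<and> hd xs = u \<and> last xs = v \<and> wt w xs = gdist V E w u v"
proof -
  have "Min (wt w ` PS V E u v) \<in> wt w ` PS V E u v"
    using PS_finite[OF assms(1)] PS_nonempty[OF assms(2-4)] by (intro Min_in) auto
  then show ?thesis by (auto simp: gdist_alt PS_def)
qed

lemma gd_nonneg:
  assumes "finite V" "induced_connected E V" "u \<in> V" "v \<in> V" "\<forall>e\<in>E. w e > 0"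
  shows "gdist V E w u v \<ge> 0"
  using gd_path[OF assms(1-4), of w] wt_nonneg assms(5) by metis

lemma gd_refl:
  assumes "finite V" "induced_connected E V" "u \<in> V" "\<forall>e\<in>E. w e > 0"
  shows "gdist V E w u u = 0"
  using gd_le_walk[OF assms(1,4), of "[u]"] gd_nonneg[OF assms(1-3,3,4)] assms(3) by simp

lemma gd_sym_le:
  assumes "finite V" "induced_connected E V" "u \<in> V" "v \<in> V" "\<forall>e\<in>E. w e > 0"
  shows "gdist V E w u v \<le> gdist V E w v u"
proof -
  obtain xs where xs: "walk V E xs" "distinct xs" "hd xs = v" "last xs = u" "wt w xs = gdist V E w v u"
    using gd_path[OF assms(1,2,4,3)] by blast
  have ne: "xs \<noteq> []" using xs(1) by (cases xs) auto
  have "walk V E (rev xs)" using xs(1) by (simp add: walk_rev)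
  from gd_le_walk[OF assms(1,5) this] show ?thesis
    using xs ne by (simp add: wt_rev hd_rev last_rev)
qed

lemma gd_sym:
  assumes "finite V" "induced_connected E V" "u \<in> V" "v \<in> V" "\<forall>e\<in>E. w e > 0"
  shows "gdist V E w u v = gdist V E w v u"
  using gd_sym_le[OF assms] gd_sym_le[OF assms(1,2,4,3,5)] by simp

lemma gd_tri:
  assumes "finite V" "induced_connected E V" "u \<in> V" "y \<in> V" "z \<in> V" "\<forall>e\<in>E. w e > 0"
  shows "gdist V E w u z \<le> gdist V E w u y + gdist V E w y z"
proof -
  obtain xs where xs: "walk V E xs" "distinct xs" "hd xs = u" "last xs = y" "wt w xs = gdist V E w u y"
    using gd_path[OF assms(1,2,3,4)] by blast
  obtain ys where ys: "walk V E ys" "distinct ys" "hd ys = y" "last ys = z" "wt w ys = gdist V E w y z"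
    using gd_path[OF assms(1,2,4,5)] by blast
  have ne: "xs \<noteq> []" "ys \<noteq> []" using xs(1) ys(1) walk_ne by auto
  then obtain ys' where ys': "ys = y # ys'" using ys(3) by (cases ys) auto
  show ?thesis
  proof (cases "ys' = []")
    case True
    then have "z = y" using ys ys' by simp
    then show ?thesis using ys ys' True xs by simp
  next
    case False
    have w1: "walk V E (xs @ ys')" using walk_append[OF ne(1) False] xs ys ys' False
      by (auto simp: walk_Cons)
    have "wt w (xs @ ys') = wt w xs + wt w ys" using wt_append[OF ne(1) False] xs(4) ys' wt_Cons[OF False] by simp
    moreover have "hd (xs @ ys') = u" "last (xs @ ys') = z" using xs ne ys ys' False by auto
    ultimately show ?thesis using gd_le_walk[OF assms(1,6) w1] xs(5) ys(5) by simp
  qed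
qed



lemma sd_single:
  assumes "finite L" "L \<noteq> {}"
  shows "\<exists>u\<in>L. setdist V E w {v} L = gdist V E w v u"
proof -
  have eq: "{gdist V E w u' u | u' u. u' \<in> {v} \<and> u \<in> L} = gdist V E w v ` L" by auto
  have "Min (gdist V E w v ` L) \<in> gdist V E w v ` L" using assms by (intro Min_in) auto
  then show ?thesis unfolding setdist_def eq by auto
qed

lemma sd_le:
  assumes "finite L1" "finite L2" "x \<in> L1" "y \<in> L2"
  shows "setdist V E w L1 L2 \<le> gdist V E w x y"
proof -
  have eq: "{gdist V E w u v | u v. u \<in> L1 \<and> v \<in> L2} = (\<lambda>(u,v). gdist V E w u v) ` (L1 \<times> L2)" by auto
  show ?thesis unfolding setdist_def eq using assms by (intro Min_le) auto
qed

definition RR :: "'v set \<Rightarrow> 'v set set \<Rightarrow> 'v \<Rightarrow> 'v \<Rightarrow> bool" where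
  "RR S E a b \<longleftrightarrow> a \<in> S \<and> b \<in> S \<and> {a,b} \<in> E"

lemma walk_reach: "walk V E xs \<Longrightarrow> set xs \<subseteq> S \<Longrightarrow> (RR S E)\<^sup>*\<^sup>* (hd xs) (last xs)"
proof (induction xs)
  case Nil then show ?case by simp
next
  case (Cons a xs)
  show ?case
  proof (cases "xs = []")
    case True then show ?thesis by simp
  next
    case False
    then have h: "walk V E xs" "{a, hd xs} \<in> E" using Cons.prems(1) by (auto simp: walk_Cons)
    have "hd xs \<in> S" using False Cons.prems(2) by (cases xs) auto
    then have "RR S E a (hd xs)" using h Cons.prems(2) by (simp add: RR_def)
    moreover have "(RR S E)\<^sup>*\<^sup>* (hd xs) (last xs)" using Cons h by simp
    ultimately show ?thesis using False by (simp add: converse_rtranclp_into_rtranclp)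
  qed
qed

lemma RR_sym_rt: "(RR S E)\<^sup>*\<^sup>* a b \<Longrightarrow> (RR S E)\<^sup>*\<^sup>* b a"
proof (induction rule: rtranclp_induct)
  case (step y z)
  then have "RR S E z y" by (auto simp: RR_def insert_commute)
  then show ?case using step by (simp add: converse_rtranclp_into_rtranclp)
qed simp

lemma RR_mono: "(RR S E)\<^sup>*\<^sup>* a b \<Longrightarrow> S \<subseteq> S' \<Longrightarrow> (RR S' E)\<^sup>*\<^sup>* a b"
proof (induction rule: rtranclp_induct)
  case (step y z)
  then have "RR S' E y z" by (auto simp: RR_def)
  then show ?case using step by (simp add: rtranclp.rtrancl_into_rtrancl)
qed simp

locale vset =
  fixes V :: "'v set" and E :: "'v set set" and w :: "'v set \<Rightarrow> real"
    and loc :: "'o \<Rightarrow> 'v set" and rad :: "'o \<Rightarrow> real" and F :: "'o set"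
  assumes finV: "finite V" and conn: "induced_connected E V" and wpos: "\<forall>e\<in>E. w e > 0"
    and objs: "\<forall>p\<in>F. loc p \<noteq> {} \<and> loc p \<subseteq> V \<and> induced_connected E (loc p)"
    and stand: "standing_assumption V E w rad F"
    and norm: "normal_family V E w loc rad F"
begin

abbreviation "d \<equiv> gdist V E w"
definition val :: "'o \<Rightarrow> 'v \<Rightarrow> real" where "val p x = setdist V E w {x} (loc p) - rad p"

lemma finloc: "p \<in> F \<Longrightarrow> finite (loc p)"
  using objs finV finite_subset by blast

lemma val_le: "p \<in> F \<Longrightarrow> u \<in> loc p \<Longrightarrow> val p x \<le> d x u - rad p"
  unfolding val_def using sd_le[of "{x}" "loc p" x u] finloc by simp

lemma val_eq: "p \<in> F \<Longrightarrow> \<exists>u\<in>loc p. val p x = d x u - rad p"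
  unfolding val_def using sd_single[of "loc p"] finloc objs by fastforce

lemma vor_iff: "x \<in> voronoi V E w loc rad F p \<longleftrightarrow> x \<in> V \<and> (\<forall>q\<in>F. val p x \<le> val q x)"
  by (simp add: voronoi_def val_def)

lemma vor_disj:
  assumes "p \<in> F" "p' \<in> F" "p \<noteq> p'" "x \<in> voronoi V E w loc rad F p" "x \<in> voronoi V E w loc rad F p'"
  shows False
proof -
  have "val p x = val p' x" "x \<in> V" using assms(1,2,4,5) by (auto simp: vor_iff intro: antisym)
  moreover obtain u where u: "u \<in> loc p" "val p x = d x u - rad p" using val_eq assms(1) by blast
  moreover obtain u' where u': "u' \<in> loc p'" "val p' x = d x u' - rad p'" using val_eq assms(2) by blast
  ultimately have eq: "d x u - rad p = d x u' - rad p'" by simp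
  have "u \<in> V" "u' \<in> V" using u u' objs assms by auto
  then have "{x, u} = {x, u'} \<or> (x = u \<and> x = u')"
    using stand eq \<open>x \<in> V\<close> assms(1,2) unfolding standing_assumption_def by blast
  then have "u = u'" by (auto simp: doubleton_eq_iff)
  moreover have "loc p \<inter> loc p' = {}" using norm assms unfolding normal_family_def by blast
  ultimately show False using u u' by blast
qed

lemma loc_sub_vor:
  assumes "p \<in> F"
  shows "loc p \<subseteq> voronoi V E w loc rad F p"
proof
  fix y assume y: "y \<in> loc p"
  have yV: "y \<in> V" using y objs assms by auto
  have vp: "val p y \<le> - rad p" using val_le[OF assms y, of y] gd_refl[OF finV conn yV wpos] by simp
  have "val p y \<le> val q y" if q: "q \<in> F" for q
  proof (cases "q = p")
    case True then show ?thesis by simp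
  next
    case False
    obtain z where z: "z \<in> loc q" "val q y = d y z - rad q" using val_eq q by blast
    have zV: "z \<in> V" using z objs q by auto
    have "setdist V E w (loc q) (loc p) \<le> d z y" using sd_le[OF finloc[OF q] finloc[OF assms] z(1) y] .
    moreover have "setdist V E w (loc q) (loc p) > rad q - rad p"
      using norm q assms False unfolding normal_family_def by blast
    moreover have "d z y = d y z" using gd_sym[OF finV conn zV yV wpos] .
    ultimately show ?thesis using z vp by simp
  qed
  then show "y \<in> voronoi V E w loc rad F p" using yV by (simp add: vor_iff)
qed

lemma vor_to_loc:
  assumes "p \<in> F" "x \<in> voronoi V E w loc rad F p"
  shows "\<exists>u\<in>loc p. (RR (voronoi V E w loc rad F p) E)\<^sup>*\<^sup>* x u"
proof -
  have xV: "x \<in> V" and xmin: "\<forall>q\<in>F. val p x \<le> val q x" using assms(2) by (auto simp: vor_iff)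
  obtain u where u: "u \<in> loc p" "val p x = d x u - rad p" using val_eq assms(1) by blast
  have uV: "u \<in> V" using u objs assms by auto
  obtain P where P: "walk V E P" "distinct P" "hd P = x" "last P = u" "wt w P = d x u"
    using gd_path[OF finV conn xV uV] by blast
  have "y \<in> voronoi V E w loc rad F p" if y: "y \<in> set P" for y
  proof -
    obtain ys zs where yz: "P = ys @ y # zs" using y by (meson split_list)
    have yV: "y \<in> V" using walk_set[OF P(1)] y by auto
    have w1: "walk V E (ys @ [y])" using walk_prefix[of V E "ys @ [y]" zs] P(1) yz by simp
    have w2: "walk V E (y # zs)" using walk_suffix[of V E ys "y # zs"] P(1) yz by simp
    have h1: "hd (ys @ [y]) = x" using P(3) yz by (cases ys) auto
    have l2: "last (y # zs) = u" using P(4) yz by (cases zs) auto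
    have d1: "d x y \<le> wt w (ys @ [y])" using gd_le_walk[OF finV wpos w1] h1 by simp
    have d2: "d y u \<le> wt w (y # zs)" using gd_le_walk[OF finV wpos w2] l2 by simp
    have sum: "wt w P = wt w (ys @ [y]) + wt w (y # zs)" using wt_split yz by simp
    have vpy: "val p y \<le> val p x - d x y"
      using val_le[OF assms(1) u(1), of y] d1 d2 sum P(5) u(2) by simp
    have "val p y \<le> val q y" if q: "q \<in> F" for q
    proof -
      obtain z where z: "z \<in> loc q" "val q y = d y z - rad q" using val_eq q by blast
      have zV: "z \<in> V" using z objs q by auto
      have "val q x \<le> d x z - rad q" using val_le[OF q z(1)] .
      moreover have "d x z \<le> d x y + d y z" using gd_tri[OF finV conn xV yV zV wpos] .
      moreover have "val p x \<le> val q x" using xmin q by blast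
      ultimately show ?thesis using vpy z(2) by simp
    qed
    then show ?thesis using yV by (simp add: vor_iff)
  qed
  then have "(RR (voronoi V E w loc rad F p) E)\<^sup>*\<^sup>* (hd P) (last P)"
    using walk_reach[OF P(1)] by blast
  then show ?thesis using P u by auto
qed

lemma vor_conn:
  assumes "p \<in> F" "x \<in> voronoi V E w loc rad F p" "y \<in> voronoi V E w loc rad F p"
  shows "(RR (voronoi V E w loc rad F p) E)\<^sup>*\<^sup>* x y"
proof -
  let ?M = "voronoi V E w loc rad F p"
  obtain u where u: "u \<in> loc p" "(RR ?M E)\<^sup>*\<^sup>* x u" using vor_to_loc[OF assms(1,2)] by blast
  obtain u' where u': "u' \<in> loc p" "(RR ?M E)\<^sup>*\<^sup>* y u'" using vor_to_loc[OF assms(1,3)] by blast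
  have ic: "induced_connected E (loc p)" using objs assms(1) by blast
  obtain xs where xs: "gpath (loc p) E xs" "hd xs = u" "last xs = u'"
    using ic u(1) u'(1) unfolding induced_connected_def by blast
  have wx: "walk (loc p) E xs" using xs(1) by (simp add: gpath_iff)
  have "(RR (loc p) E)\<^sup>*\<^sup>* u u'" using walk_reach[OF wx walk_set[OF wx]] xs by simp
  then have "(RR ?M E)\<^sup>*\<^sup>* u u'" by (rule RR_mono[OF _ loc_sub_vor[OF assms(1)]])
  then show ?thesis using u(2) RR_sym_rt[OF u'(2)] by (meson rtranclp_trans)
qed

lemma vor_cover3:
  assumes "F = {p1, p2, p3}" "x \<in> V"
  shows "x \<in> voronoi V E w loc rad F p1 \<or> x \<in> voronoi V E w loc rad F p2 \<or> x \<in> voronoi V E w loc rad F p3"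
proof -
  have "(\<forall>q\<in>F. val p1 x \<le> val q x) \<or> (\<forall>q\<in>F. val p2 x \<le> val q x) \<or> (\<forall>q\<in>F. val p3 x \<le> val q x)"
    unfolding assms(1)
    by (cases "val p1 x \<le> val p2 x"; cases "val p1 x \<le> val p3 x"; cases "val p2 x \<le> val p3 x") auto
  then show ?thesis using assms(2) vor_iff by blast
qed

end



lemma graph_card:
  assumes "finite S" "finite ES" "\<forall>x\<in>S. \<forall>y\<in>S. (RR S ES)\<^sup>*\<^sup>* x y"
  shows "card S \<le> card ES + 1"
proof (cases "S = {}")
  case True then show ?thesis by simp
next
  case False
  then obtain r where r: "r \<in> S" by blast
  let ?R = "RR S ES"
  define n where "n u = (LEAST k. (?R ^^ k) r u)" for u
  have ex: "\<exists>k. (?R ^^ k) r u" if "u \<in> S" for u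
  proof -
    have "?R\<^sup>*\<^sup>* r u" using assms(3) r that by blast
    then show ?thesis by (rule rtranclp_imp_relpowp)
  qed
  have nI: "(?R ^^ n u) r u" if "u \<in> S" for u
    unfolding n_def using ex[OF that] by (rule LeastI_ex)
  have nle: "(?R ^^ k) r u \<Longrightarrow> n u \<le> k" for u k
    unfolding n_def by (rule Least_le)
  define par where "par u = (SOME y. (?R ^^ (n u - 1)) r y \<and> ?R y u)" for u
  have parP: "(?R ^^ (n u - 1)) r (par u) \<and> ?R (par u) u \<and> n u > 0"
    if u: "u \<in> S" "u \<noteq> r" for u
  proof -
    have "n u \<noteq> 0"
    proof
      assume "n u = 0"
      then have "(?R ^^ 0) r u" using nI[OF u(1)] by simp
      then show False using u(2) by simp
    qed
    then have "(?R ^^ Suc (n u - 1)) r u" using nI[OF u(1)] by simp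
    then have "\<exists>y. (?R ^^ (n u - 1)) r y \<and> ?R y u" by (meson relpowp_Suc_E)
    then have "(?R ^^ (n u - 1)) r (par u) \<and> ?R (par u) u" unfolding par_def by (rule someI_ex)
    then show ?thesis using \<open>n u \<noteq> 0\<close> by simp
  qed
  have npar: "n (par u) = n u - 1" if u: "u \<in> S" "u \<noteq> r" for u
  proof -
    have a: "n (par u) \<le> n u - 1" using parP[OF u] nle by blast
    have ps: "par u \<in> S" using parP[OF u] by (simp add: RR_def)
    have "(?R ^^ Suc (n (par u))) r u" using nI[OF ps] parP[OF u] by (meson relpowp_Suc_I)
    then have "n u \<le> Suc (n (par u))" using nle by blast
    then show ?thesis using a by simp
  qed
  define g where "g u = {u, par u}" for u
  have gin: "g ` (S - {r}) \<subseteq> ES"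
    using parP by (auto simp: g_def RR_def insert_commute)
  have inj: "inj_on g (S - {r})"
  proof (rule inj_onI)
    fix u v assume u: "u \<in> S - {r}" and v: "v \<in> S - {r}" and eq: "g u = g v"
    show "u = v"
    proof (rule ccontr)
      assume ne: "u \<noteq> v"
      then have uv: "u = par v" "par u = v" using eq by (auto simp: g_def doubleton_eq_iff)
      have us: "u \<in> S" "u \<noteq> r" and vs: "v \<in> S" "v \<noteq> r" using u v by auto
      have "n u = n v - 1" using npar[OF vs] uv(1) by simp
      moreover have "n v = n u - 1" using npar[OF us] uv(2) by simp
      moreover have "n u > 0" using parP[OF us] by blast
      moreover have "n v > 0" using parP[OF vs] by blast
      ultimately show False by simp
    qed
  qed
  have "card (S - {r}) \<le> card ES" using card_inj_on_le[OF inj gin assms(2)] .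
  moreover have "card S > 0" using r assms(1) card_gt_0_iff by blast
  moreover have "card (S - {r}) = card S - 1" using r assms(1) by (simp add: card_Diff_singleton)
  ultimately show ?thesis by simp
qed

lemma rt_lift:
  assumes "(RR S ES)\<^sup>*\<^sup>* x y" "\<And>a b. RR S ES a b \<Longrightarrow> (RR S ES')\<^sup>*\<^sup>* a b"
  shows "(RR S ES')\<^sup>*\<^sup>* x y"
  using assms(1)
proof (induction rule: rtranclp_induct)
  case (step y z)
  then show ?case using assms(2) by (meson rtranclp_trans)
qed simp

lemma collapse:
  fixes tri :: "'f \<Rightarrow> 'v set"
  assumes "finite S" "finite ES" "finite FS"
    and "\<forall>f\<in>FS. tri f \<subseteq> S \<and> card (tri f) = 3 \<and> (\<forall>a\<in>tri f. \<forall>b\<in>tri f. a \<noteq> b \<longrightarrow> {a,b} \<in> ES)"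
    and "\<forall>x\<in>S. \<forall>y\<in>S. (RR S ES)\<^sup>*\<^sup>* x y"
    and "\<forall>Q\<subseteq>FS. Q \<noteq> {} \<longrightarrow> (\<exists>g\<in>Q. \<exists>a b. a \<noteq> b \<and> a \<in> tri g \<and> b \<in> tri g \<and>
            (\<forall>h\<in>Q. h \<noteq> g \<longrightarrow> \<not> {a,b} \<subseteq> tri h))"
  shows "card S + card FS \<le> card ES + 1"
  using assms
proof (induction "card FS" arbitrary: FS ES)
  case 0
  then have "FS = {}" by simp
  then show ?case using graph_card[OF "0.prems"(1,2,5)] by simp
next
  case (Suc k)
  then have "FS \<noteq> {}" by auto
  then obtain g a b where g: "g \<in> FS" "a \<noteq> b" "a \<in> tri g" "b \<in> tri g"
      and free: "\<forall>h\<in>FS. h \<noteq> g \<longrightarrow> \<not> {a,b} \<subseteq> tri h"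
    using Suc.prems(6)[rule_format, OF order_refl \<open>FS \<noteq> {}\<close>] by blast
  have c3: "card (tri g) = 3" using Suc.prems(4) g(1) by blast
  have "card (tri g - {a,b}) = 1" using c3 g by (simp add: card_Diff_subset)
  then have "tri g - {a,b} \<noteq> {}" by (metis card.empty one_neq_zero)
  then obtain c where c: "c \<in> tri g" "c \<noteq> a" "c \<noteq> b" by blast
  have eES: "{a,b} \<in> ES" using Suc.prems(4) g by blast
  define ES' where "ES' = ES - {{a,b}}"
  define FS' where "FS' = FS - {g}"
  have cardF: "card FS' = k" using Suc.hyps(2) g(1) Suc.prems(3) by (simp add: FS'_def)
  have cardE: "card ES' = card ES - 1" using eES Suc.prems(2) by (simp add: ES'_def)
  have "card ES \<ge> 1" using eES Suc.prems(2) card_0_eq[of ES] by (cases "card ES") auto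
  have h4: "\<forall>f\<in>FS'. tri f \<subseteq> S \<and> card (tri f) = 3 \<and> (\<forall>x\<in>tri f. \<forall>y\<in>tri f. x \<noteq> y \<longrightarrow> {x,y} \<in> ES')"
  proof (intro ballI conjI allI impI)
    fix f assume f: "f \<in> FS'"
    then show "tri f \<subseteq> S" "card (tri f) = 3" using Suc.prems(4) by (auto simp: FS'_def)
    fix x y assume xy: "x \<in> tri f" "y \<in> tri f" "x \<noteq> y"
    then have "{x,y} \<in> ES" using Suc.prems(4) f by (auto simp: FS'_def)
    moreover have "{x,y} \<noteq> {a,b}" using free f xy by (auto simp: FS'_def)
    ultimately show "{x,y} \<in> ES'" by (simp add: ES'_def)
  qed
  have step: "(RR S ES')\<^sup>*\<^sup>* x y" if "RR S ES x y" for x y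
  proof (cases "{x,y} = {a,b}")
    case False
    then have "RR S ES' x y" using that by (simp add: RR_def ES'_def)
    then show ?thesis by simp
  next
    case True
    have cS: "c \<in> S" using Suc.prems(4) g(1) c(1) by blast
    have xyS: "x \<in> S" "y \<in> S" using that by (auto simp: RR_def)
    have ac: "{a,c} \<in> ES'" "{c,b} \<in> ES'" using Suc.prems(4) g c by (auto simp: ES'_def doubleton_eq_iff)
    have "x = a \<and> y = b \<or> x = b \<and> y = a" using True by (auto simp: doubleton_eq_iff)
    then show ?thesis
    proof
      assume "x = a \<and> y = b"
      then have "RR S ES' x c" "RR S ES' c y" using ac cS xyS by (auto simp: RR_def)
      then show ?thesis by (meson converse_rtranclp_into_rtranclp rtranclp.rtrancl_refl)
    next
      assume "x = b \<and> y = a"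
      then have "RR S ES' x c" "RR S ES' c y" using ac cS xyS by (auto simp: RR_def insert_commute)
      then show ?thesis by (meson converse_rtranclp_into_rtranclp rtranclp.rtrancl_refl)
    qed
  qed
  have h5: "\<forall>x\<in>S. \<forall>y\<in>S. (RR S ES')\<^sup>*\<^sup>* x y"
  proof (intro ballI)
    fix x y assume "x \<in> S" "y \<in> S"
    then have "(RR S ES)\<^sup>*\<^sup>* x y" using Suc.prems(5) by blast
    then show "(RR S ES')\<^sup>*\<^sup>* x y" using rt_lift[OF _ step] by blast
  qed
  have h6: "\<forall>Q\<subseteq>FS'. Q \<noteq> {} \<longrightarrow> (\<exists>g\<in>Q. \<exists>a b. a \<noteq> b \<and> a \<in> tri g \<and> b \<in> tri g \<and>
            (\<forall>h\<in>Q. h \<noteq> g \<longrightarrow> \<not> {a,b} \<subseteq> tri h))"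
  proof (intro allI impI)
    fix Q assume q: "Q \<subseteq> FS'" "Q \<noteq> {}"
    then have "Q \<subseteq> FS" by (auto simp: FS'_def)
    then show "\<exists>g\<in>Q. \<exists>a b. a \<noteq> b \<and> a \<in> tri g \<and> b \<in> tri g \<and>
            (\<forall>h\<in>Q. h \<noteq> g \<longrightarrow> \<not> {a,b} \<subseteq> tri h)"
      using Suc.prems(6)[rule_format, OF _ q(2)] by blast
  qed
  have "card S + card FS' \<le> card ES' + 1"
    using Suc.hyps(1)[OF cardF[symmetric] Suc.prems(1) _ _ h4 h5 h6] Suc.prems(2,3)
    by (simp add: ES'_def FS'_def)
  then show ?case using cardF cardE Suc.hyps(2) \<open>card ES \<ge> 1\<close> by simp
qed



lemma st_unfold:
  assumes "sphere_triangulation V E Fc tri"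
  shows "finite V" "finite Fc" "card V \<ge> 3" "\<forall>e\<in>E. e \<subseteq> V \<and> card e = 2"
    "\<forall>f\<in>Fc. tri f \<subseteq> V \<and> card (tri f) = 3 \<and> (\<forall>a\<in>tri f. \<forall>b\<in>tri f. a \<noteq> b \<longrightarrow> {a, b} \<in> E)"
    "\<forall>e\<in>E. card {f \<in> Fc. e \<subseteq> tri f} = 2"
    "\<forall>v\<in>V. \<forall>f\<in>faces_at Fc tri v. \<forall>g\<in>faces_at Fc tri v. (adj_at Fc tri v)\<^sup>*\<^sup>* f g"
    "induced_connected E V"
    "int (card V) - int (card E) + int (card Fc) = 2"
  using assms unfolding sphere_triangulation_def by blast+

lemma st_finE: "sphere_triangulation V E Fc tri \<Longrightarrow> finite E"
  using st_unfold(1,4)[of V E Fc tri] by (meson Pow_iff finite_Pow_iff finite_subset subsetI)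

lemma edge_face:
  assumes "sphere_triangulation V E Fc tri" "e \<in> E"
  shows "\<exists>f\<in>Fc. e \<subseteq> tri f"
proof -
  have "card {f \<in> Fc. e \<subseteq> tri f} = 2" using st_unfold(6)[OF assms(1)] assms(2) by blast
  then have "{f \<in> Fc. e \<subseteq> tri f} \<noteq> {}" by (metis card.empty zero_neq_numeral)
  then show ?thesis by blast
qed

lemma tri_ne:
  assumes "sphere_triangulation V E Fc tri" "f \<in> Fc"
  shows "\<exists>v. v \<in> tri f"
proof -
  have "card (tri f) = 3" using st_unfold(5)[OF assms(1)] assms(2) by blast
  then show ?thesis by (metis card.empty ex_in_conv zero_neq_numeral)
qed

lemma closed_all:
  assumes st: "sphere_triangulation V E Fc tri" and Q: "Q \<subseteq> Fc" "Q \<noteq> {}"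
    and cl: "\<forall>g\<in>Q. \<forall>h\<in>Fc. (\<exists>e\<in>E. e \<subseteq> tri g \<and> e \<subseteq> tri h) \<longrightarrow> h \<in> Q"
  shows "Q = Fc"
proof -
  note su = st_unfold[OF st]
  have claim1: "g \<in> Q" if v: "v \<in> V" and f: "f \<in> faces_at Fc tri v" "f \<in> Q" and g: "g \<in> faces_at Fc tri v" for v f g
  proof -
    have "(adj_at Fc tri v)\<^sup>*\<^sup>* f g" using su(7) v f g by blast
    then show ?thesis
    proof (induction rule: rtranclp_induct)
      case base then show ?case using f by simp
    next
      case (step y z)
      obtain a where a: "a \<noteq> v" "a \<in> tri y" "a \<in> tri z" "y \<in> Fc" "v \<in> tri y" "z \<in> Fc"
        using step(2) unfolding adj_at_def faces_at_def by blast
      have pairs: "\<forall>a\<in>tri y. \<forall>b\<in>tri y. a \<noteq> b \<longrightarrow> {a,b} \<in> E" using su(5) a(4) by blast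
      have "v \<noteq> a" using a(1) by simp
      then have "{v, a} \<in> E" using pairs a(2,5) by blast
      moreover have "v \<in> tri z" using step(2) unfolding adj_at_def faces_at_def by blast
      ultimately have "\<exists>e\<in>E. e \<subseteq> tri y \<and> e \<subseteq> tri z" using a(5) a(2,3) by (intro bexI[of _ "{v,a}"]) auto
      then show ?case using cl step(3) a(6) by blast
    qed
  qed
  define B where "B = {v \<in> V. \<exists>f\<in>Q. v \<in> tri f}"
  have claim2: "y \<in> B" if xB: "x \<in> B" and xy: "RR V E x y" for x y
  proof -
    have e: "{x,y} \<in> E" "y \<in> V" "x \<in> V" using xy by (auto simp: RR_def)
    obtain h where h: "h \<in> Fc" "{x,y} \<subseteq> tri h" using edge_face[OF st e(1)] by blast
    obtain f where f: "f \<in> Q" "x \<in> tri f" using xB by (auto simp: B_def)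
    have "h \<in> Q" using claim1[OF e(3), of f h] f h Q(1) by (auto simp: faces_at_def)
    then show ?thesis using h e by (auto simp: B_def)
  qed
  obtain q where q: "q \<in> Q" using Q by blast
  obtain x0 where x0: "x0 \<in> tri q" using tri_ne[OF st] q Q by blast
  have x0B: "x0 \<in> B" using x0 q Q su(5) by (auto simp: B_def)
  have allB: "v \<in> B" if v: "v \<in> V" for v
  proof -
    have x0V: "x0 \<in> V" using x0B by (simp add: B_def)
    obtain xs where xs: "gpath V E xs" "hd xs = x0" "last xs = v"
      using su(8) x0V v unfolding induced_connected_def by blast
    have wx: "walk V E xs" using xs(1) by (simp add: gpath_iff)
    have "(RR V E)\<^sup>*\<^sup>* x0 v" using walk_reach[OF wx walk_set[OF wx]] xs by simp
    then show ?thesis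
    proof (induction rule: rtranclp_induct)
      case base then show ?case using x0B .
    next
      case (step y z) then show ?case using claim2 by blast
    qed
  qed
  show ?thesis
  proof
    show "Fc \<subseteq> Q"
    proof
      fix f assume f: "f \<in> Fc"
      obtain v where v: "v \<in> tri f" using tri_ne[OF st f] by blast
      have vV: "v \<in> V" using su(5) f v by blast
      obtain f' where f': "f' \<in> Q" "v \<in> tri f'" using allB[OF vV] by (auto simp: B_def)
      show "f \<in> Q" using claim1[OF vV, of f' f] f' f v Q(1) by (auto simp: faces_at_def)
    qed
  qed (rule Q(1))
qed

lemma vertex_face:
  assumes st: "sphere_triangulation V E Fc tri" and v: "v \<in> V"
  shows "\<exists>f\<in>Fc. v \<in> tri f"
proof -
  note su = st_unfold[OF st]
  have "V - {v} \<noteq> {}"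
  proof
    assume "V - {v} = {}"
    then have "V \<subseteq> {v}" by blast
    then have "card V \<le> 1" using card_mono[of "{v}" V] by simp
    then show False using su(3) by simp
  qed
  then obtain u where u: "u \<in> V" "u \<noteq> v" by blast
  obtain xs where xs: "gpath V E xs" "hd xs = v" "last xs = u"
    using su(8) u v unfolding induced_connected_def by blast
  have wx: "walk V E xs" using xs(1) by (simp add: gpath_iff)
  obtain x rest where "xs = v # x # rest"
    using xs wx u(2) by (cases xs; cases "tl xs"; auto)
  then have "{v, x} \<in> E" using wx by simp
  then obtain f where "f \<in> Fc" "{v,x} \<subseteq> tri f" using edge_face[OF st] by blast
  then show ?thesis by blast
qed

lemma class_free0:
  assumes st: "sphere_triangulation V E Fc tri" and S: "S \<subseteq> V" "S \<noteq> V"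
    and Q: "Q \<subseteq> {f \<in> Fc. tri f \<subseteq> S}" "Q \<noteq> {}"
  shows "\<exists>g\<in>Q. \<exists>a b. a \<noteq> b \<and> a \<in> tri g \<and> b \<in> tri g \<and>
            (\<forall>h\<in>Q. h \<noteq> g \<longrightarrow> \<not> {a,b} \<subseteq> tri h)"
proof -
  note su = st_unfold[OF st]
  have QF: "Q \<subseteq> Fc" using Q by blast
  have "Q \<noteq> Fc"
  proof
    assume "Q = Fc"
    have "V \<subseteq> S"
    proof
      fix v assume "v \<in> V"
      then obtain f where "f \<in> Fc" "v \<in> tri f" using vertex_face[OF st] by blast
      then show "v \<in> S" using Q(1) \<open>Q = Fc\<close> by blast
    qed
    then show False using S by blast
  qed
  then have "\<not> (\<forall>g\<in>Q. \<forall>h\<in>Fc. (\<exists>e\<in>E. e \<subseteq> tri g \<and> e \<subseteq> tri h) \<longrightarrow> h \<in> Q)"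
    using closed_all[OF st QF Q(2)] by blast
  then obtain g h e where g: "g \<in> Q" "h \<in> Fc" "e \<in> E" "e \<subseteq> tri g" "e \<subseteq> tri h" "h \<notin> Q" by blast
  have "card e = 2" using su(4) g(3) by blast
  then obtain a b where ab: "a \<noteq> b" "e = {a,b}" by (meson card_2_iff)
  have "\<forall>h\<in>Q. h \<noteq> g \<longrightarrow> \<not> {a,b} \<subseteq> tri h"
  proof (intro ballI impI notI)
    fix h' assume h': "h' \<in> Q" "h' \<noteq> g" "{a,b} \<subseteq> tri h'"
    have sub: "{g, h, h'} \<subseteq> {f \<in> Fc. e \<subseteq> tri f}" using g h' ab QF by auto
    have ne: "g \<noteq> h" "h' \<noteq> h" using g(1,6) h'(1) by blast+
    have "card {g, h, h'} = 3" using ne h'(2) by simp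
    moreover have "card {f \<in> Fc. e \<subseteq> tri f} = 2" using su(6) g(3) by blast
    ultimately show False using card_mono[OF _ sub] su(2) by simp
  qed
  moreover have "a \<in> tri g" "b \<in> tri g" using g(4) ab(2) by auto
  ultimately show ?thesis using ab(1) g(1) by (intro bexI[OF _ g(1)] exI[of _ a] exI[of _ b] conjI) simp_all
qed

lemma class_free:
  assumes st: "sphere_triangulation V E Fc tri" and S: "S \<subseteq> V" "S \<noteq> V"
  shows "\<forall>Q\<subseteq>{f \<in> Fc. tri f \<subseteq> S}. Q \<noteq> {} \<longrightarrow> (\<exists>g\<in>Q. \<exists>a b. a \<noteq> b \<and> a \<in> tri g \<and> b \<in> tri g \<and>
            (\<forall>h\<in>Q. h \<noteq> g \<longrightarrow> \<not> {a,b} \<subseteq> tri h))"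
  by (intro allI impI) (rule class_free0[OF st S], assumption+)

lemma class_ineq:
  assumes st: "sphere_triangulation V E Fc tri" and S: "S \<subseteq> V" "S \<noteq> V"
    and conn: "\<forall>x\<in>S. \<forall>y\<in>S. (RR S E)\<^sup>*\<^sup>* x y"
  shows "card S + card {f \<in> Fc. tri f \<subseteq> S} \<le> card {e \<in> E. e \<subseteq> S} + 1"
proof -
  note su = st_unfold[OF st]
  have RReq: "RR S E = RR S {e \<in> E. e \<subseteq> S}" by (auto simp: RR_def fun_eq_iff)
  show ?thesis
  proof (rule collapse)
    show "finite S" using su(1) S finite_subset by blast
    show "finite {e \<in> E. e \<subseteq> S}" using st_finE[OF st] by simp
    show "finite {f \<in> Fc. tri f \<subseteq> S}" using su(2) by simp
    show "\<forall>f\<in>{f \<in> Fc. tri f \<subseteq> S}. tri f \<subseteq> S \<and> card (tri f) = 3 \<and>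
        (\<forall>a\<in>tri f. \<forall>b\<in>tri f. a \<noteq> b \<longrightarrow> {a, b} \<in> {e \<in> E. e \<subseteq> S})"
      using su(5) by blast
    show "\<forall>x\<in>S. \<forall>y\<in>S. (RR S {e \<in> E. e \<subseteq> S})\<^sup>*\<^sup>* x y" using conn RReq by simp
    show "\<forall>Q\<subseteq>{f \<in> Fc. tri f \<subseteq> S}. Q \<noteq> {} \<longrightarrow> (\<exists>g\<in>Q. \<exists>a b. a \<noteq> b \<and> a \<in> tri g \<and> b \<in> tri g \<and>
            (\<forall>h\<in>Q. h \<noteq> g \<longrightarrow> \<not> {a,b} \<subseteq> tri h))" using class_free[OF st S] .
  qed
qed



lemma card_filter_sum: "finite B \<Longrightarrow> card {b\<in>B. P b} = (\<Sum>b\<in>B. if P b then 1 else 0)"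
  by (simp add: sum.inter_filter[symmetric])

lemma sum_card_swap:
  assumes "finite A" "finite B"
  shows "(\<Sum>a\<in>A. card {b\<in>B. P a b}) = (\<Sum>b\<in>B. card {a\<in>A. P a b})"
proof -
  have "(\<Sum>a\<in>A. card {b\<in>B. P a b}) = (\<Sum>a\<in>A. \<Sum>b\<in>B. if P a b then 1 else 0)"
    using assms by (simp add: card_filter_sum)
  also have "\<dots> = (\<Sum>b\<in>B. \<Sum>a\<in>A. if P a b then 1 else 0)" by (rule sum.swap)
  also have "\<dots> = (\<Sum>b\<in>B. card {a\<in>A. P a b})"
    using assms by (simp add: card_filter_sum)
  finally show ?thesis .
qed

lemma face_count2:
  assumes T: "card T = 3" and N: "finite N" "\<forall>x\<in>T. \<forall>y\<in>T. col x \<noteq> col y \<longrightarrow> {x,y} \<in> N"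
    and xy: "x \<in> T" "y \<in> T" "col x \<noteq> col y"
  shows "card N \<ge> 2"
proof -
  have nxy: "x \<noteq> y" using xy by auto
  have "card {x,y} = 2" using nxy by simp
  moreover have "{x,y} \<subseteq> T" using xy by simp
  moreover have "finite T" using T card_ge_0_finite by force
  ultimately have "card (T - {x,y}) = 1" using T by (simp add: card_Diff_subset)
  then have "T - {x,y} \<noteq> {}" by (metis card.empty one_neq_zero)
  then obtain z where z: "z \<in> T" "z \<noteq> x" "z \<noteq> y" by blast
  show ?thesis
  proof (cases "col z = col x")
    case False
    then have "{x,z} \<in> N" using N(2)[rule_format, OF xy(1) z(1)] by auto
    moreover have "{x,y} \<in> N" using N(2)[rule_format, OF xy(1) xy(2) xy(3)] .
    ultimately have "{{x,y},{x,z}} \<subseteq> N" by simp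
    moreover have "{x,y} \<noteq> {x,z}" using z nxy by (auto simp: doubleton_eq_iff)
    ultimately have c: "card {{x,y},{x,z}} = 2" and s: "{{x,y},{x,z}} \<subseteq> N" by simp_all
    from card_mono[OF N(1) s] c show ?thesis by linarith
  next
    case True
    then have "{z,y} \<in> N" using N(2)[rule_format, OF z(1) xy(2)] xy(3) by auto
    moreover have "{x,y} \<in> N" using N(2)[rule_format, OF xy(1) xy(2) xy(3)] .
    ultimately have "{{x,y},{z,y}} \<subseteq> N" by simp
    moreover have "{x,y} \<noteq> {z,y}" using z nxy by (auto simp: doubleton_eq_iff)
    ultimately have c: "card {{x,y},{z,y}} = 2" and s: "{{x,y},{z,y}} \<subseteq> N" by simp_all
    from card_mono[OF N(1) s] c show ?thesis by linarith
  qed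
qed

lemma face_count3:
  assumes N: "finite N" "\<forall>x\<in>T. \<forall>y\<in>T. col x \<noteq> col y \<longrightarrow> {x,y} \<in> N"
    and xyz: "x \<in> T" "y \<in> T" "z \<in> T" "col x \<noteq> col y" "col x \<noteq> col z" "col y \<noteq> col z"
  shows "card N \<ge> 3"
proof -
  have d: "x \<noteq> y" "x \<noteq> z" "y \<noteq> z" using xyz by auto
  have "{x,y} \<in> N" "{x,z} \<in> N" "{y,z} \<in> N"
    using N(2)[rule_format, OF xyz(1) xyz(2) xyz(4)] N(2)[rule_format, OF xyz(1) xyz(3) xyz(5)]
      N(2)[rule_format, OF xyz(2) xyz(3) xyz(6)] by auto
  then have s: "{{x,y},{x,z},{y,z}} \<subseteq> N" by simp
  have "{x,y} \<noteq> {x,z}" "{x,y} \<noteq> {y,z}" "{x,z} \<noteq> {y,z}" using d by (auto simp: doubleton_eq_iff)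
  then have c: "card {{x,y},{x,z},{y,z}} = 3" by simp
  from card_mono[OF N(1) s] c show ?thesis by linarith
qed



lemma pigeon3:
  assumes "q1 \<in> {p1,p2,p3}" "q2 \<in> {p1,p2,p3}" "q3 \<in> {p1,p2,p3}" "q1 \<noteq> q2" "q1 \<noteq> q3" "q2 \<noteq> q3"
  shows "p1 \<in> {q1,q2,q3}" "p2 \<in> {q1,q2,q3}" "p3 \<in> {q1,q2,q3}"
  using assms by simp_all blast+

lemma count_main:
  fixes M1 M2 M3 :: "'v set" and Ft :: "'f set"
  assumes st: "sphere_triangulation V E Fc tri"
    and MV: "M1 \<subseteq> V" "M2 \<subseteq> V" "M3 \<subseteq> V" and cov: "V \<subseteq> M1 \<union> M2 \<union> M3"
    and disj: "M1 \<inter> M2 = {}" "M1 \<inter> M3 = {}" "M2 \<inter> M3 = {}"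
    and c1: "\<forall>x\<in>M1. \<forall>y\<in>M1. (RR M1 E)\<^sup>*\<^sup>* x y"
    and c2: "\<forall>x\<in>M2. \<forall>y\<in>M2. (RR M2 E)\<^sup>*\<^sup>* x y"
    and c3: "\<forall>x\<in>M3. \<forall>y\<in>M3. (RR M3 E)\<^sup>*\<^sup>* x y"
    and Ft: "Ft \<subseteq> Fc" "\<forall>f\<in>Ft. \<exists>a\<in>tri f. \<exists>b\<in>tri f. \<exists>c\<in>tri f. a \<in> M1 \<and> b \<in> M2 \<and> c \<in> M3"
  shows "card Ft \<le> 2"
proof (cases "Ft = {}")
  case True then show ?thesis by simp
next
  case False
  note su = st_unfold[OF st]
  have finE: "finite E" using st_finE[OF st] .
  obtain f0 where f0: "f0 \<in> Ft" using False by blast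
  obtain a0 b0 c0 where abc0: "a0 \<in> tri f0" "b0 \<in> tri f0" "c0 \<in> tri f0" "a0 \<in> M1" "b0 \<in> M2" "c0 \<in> M3"
    using Ft(2) f0 by blast
  have T0: "tri f0 \<subseteq> V" using st_unfold(5)[OF st] Ft(1) f0 by blast
  have "a0 \<in> V" "b0 \<in> V" "c0 \<in> V" using T0 abc0 by blast+
  moreover have "b0 \<notin> M1" "a0 \<notin> M2" "a0 \<notin> M3" using abc0 disj by blast+
  ultimately have MnV: "M1 \<noteq> V" "M2 \<noteq> V" "M3 \<noteq> V" by blast+
  define col where "col x = (if x \<in> M1 then 1 else if x \<in> M2 then 2 else (3::nat))" for x
  have colM: "(x \<in> M1 \<longleftrightarrow> col x = 1) \<and> (x \<in> M2 \<longleftrightarrow> col x = 2) \<and> (x \<in> M3 \<longleftrightarrow> col x = 3)"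
    if xV: "x \<in> V" for x
  proof -
    have n: "x \<in> M1 \<Longrightarrow> x \<notin> M2" "x \<in> M1 \<Longrightarrow> x \<notin> M3" "x \<in> M2 \<Longrightarrow> x \<notin> M3"
      "x \<in> M2 \<Longrightarrow> x \<notin> M1" "x \<in> M3 \<Longrightarrow> x \<notin> M1" "x \<in> M3 \<Longrightarrow> x \<notin> M2" using disj by blast+
    have "x \<in> M1 \<or> x \<in> M2 \<or> x \<in> M3" using xV cov by blast
    then show ?thesis
    proof (elim disjE)
      assume h: "x \<in> M1" then have "x \<notin> M2" "x \<notin> M3" using n by blast+
      then show ?thesis using h by (simp add: col_def)
    next
      assume h: "x \<in> M2" then have "x \<notin> M1" "x \<notin> M3" using n by blast+
      then show ?thesis using h by (simp add: col_def)
    next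
      assume h: "x \<in> M3" then have "x \<notin> M1" "x \<notin> M2" using n by blast+
      then show ?thesis using h by (simp add: col_def)
    qed
  qed
  define Em where "Em = {e \<in> E. e \<subseteq> M1} \<union> {e \<in> E. e \<subseteq> M2} \<union> {e \<in> E. e \<subseteq> M3}"
  define Eb where "Eb = E - Em"
  define Fm where "Fm = {f \<in> Fc. tri f \<subseteq> M1} \<union> {f \<in> Fc. tri f \<subseteq> M2} \<union> {f \<in> Fc. tri f \<subseteq> M3}"
  define Fn where "Fn = Fc - Fm"
  have eNE: "e \<noteq> {}" if "e \<in> E" for e
  proof -
    have "card e = 2" using su(4) that by blast
    then show ?thesis by (metis card.empty zero_neq_numeral)
  qed
  have fNE: "tri f \<noteq> {}" if "f \<in> Fc" for f
  proof -
    have "card (tri f) = 3" using su(5) that by blast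
    then show ?thesis by (metis card.empty zero_neq_numeral)
  qed
  have cE: "card E = card Em + card Eb"
  proof -
    have "Em \<subseteq> E" by (auto simp: Em_def)
    then show ?thesis unfolding Eb_def using finE card_Diff_subset[of Em E] card_mono[of E Em]
      by (simp add: finite_subset)
  qed
  have cEm: "card Em = card {e \<in> E. e \<subseteq> M1} + card {e \<in> E. e \<subseteq> M2} + card {e \<in> E. e \<subseteq> M3}"
  proof -
    have d1: "{e \<in> E. e \<subseteq> M1} \<inter> {e \<in> E. e \<subseteq> M2} = {}" using disj eNE by blast
    have d2: "({e \<in> E. e \<subseteq> M1} \<union> {e \<in> E. e \<subseteq> M2}) \<inter> {e \<in> E. e \<subseteq> M3} = {}" using disj eNE by blast
    show ?thesis unfolding Em_def using finE d1 d2 by (simp add: card_Un_disjoint)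
  qed
  have cF: "card Fc = card Fm + card Fn"
  proof -
    have "Fm \<subseteq> Fc" by (auto simp: Fm_def)
    then show ?thesis unfolding Fn_def using su(2) card_Diff_subset[of Fm Fc] card_mono[of Fc Fm]
      by (simp add: finite_subset)
  qed
  have cFm: "card Fm = card {f \<in> Fc. tri f \<subseteq> M1} + card {f \<in> Fc. tri f \<subseteq> M2} + card {f \<in> Fc. tri f \<subseteq> M3}"
  proof -
    have d1: "{f \<in> Fc. tri f \<subseteq> M1} \<inter> {f \<in> Fc. tri f \<subseteq> M2} = {}" using disj fNE by blast
    have d2: "({f \<in> Fc. tri f \<subseteq> M1} \<union> {f \<in> Fc. tri f \<subseteq> M2}) \<inter> {f \<in> Fc. tri f \<subseteq> M3} = {}" using disj fNE by blast
    show ?thesis unfolding Fm_def using su(2) d1 d2 by (simp add: card_Un_disjoint)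
  qed
  have cV: "card V = card M1 + card M2 + card M3"
  proof -
    have "V = M1 \<union> M2 \<union> M3" using MV cov by blast
    moreover have "finite M1" "finite M2" "finite M3" using MV su(1) finite_subset by blast+
    ultimately show ?thesis using disj by (simp add: card_Un_disjoint Int_Un_distrib2)
  qed
  have i1: "card M1 + card {f \<in> Fc. tri f \<subseteq> M1} \<le> card {e \<in> E. e \<subseteq> M1} + 1"
    using class_ineq[OF st MV(1) MnV(1) c1] .
  have i2: "card M2 + card {f \<in> Fc. tri f \<subseteq> M2} \<le> card {e \<in> E. e \<subseteq> M2} + 1"
    using class_ineq[OF st MV(2) MnV(2) c2] .
  have i3: "card M3 + card {f \<in> Fc. tri f \<subseteq> M3} \<le> card {e \<in> E. e \<subseteq> M3} + 1"
    using class_ineq[OF st MV(3) MnV(3) c3] .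
  have Nprop: "\<forall>x\<in>tri f. \<forall>y\<in>tri f. col x \<noteq> col y \<longrightarrow> {x,y} \<in> {e \<in> Eb. e \<subseteq> tri f}"
    if f: "f \<in> Fc" for f
  proof (intro ballI impI)
    fix x y assume xy: "x \<in> tri f" "y \<in> tri f" "col x \<noteq> col y"
    have V: "x \<in> V" "y \<in> V" using su(5) f xy by blast+
    have "x \<noteq> y" using xy by auto
    then have inE: "{x,y} \<in> E" using su(5) f xy(1,2) by blast
    have "{x,y} \<notin> Em" using colM[OF V(1)] colM[OF V(2)] xy(3) by (auto simp: Em_def)
    then show "{x,y} \<in> {e \<in> Eb. e \<subseteq> tri f}" using inE xy by (simp add: Eb_def)
  qed
  have finN: "finite {e \<in> Eb. e \<subseteq> tri f}" for f using finE by (simp add: Eb_def)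
  have fn2: "card {e \<in> Eb. e \<subseteq> tri f} \<ge> 2" if f: "f \<in> Fn" for f
  proof -
    have fF: "f \<in> Fc" "f \<notin> Fm" using f by (auto simp: Fn_def)
    have "\<exists>x\<in>tri f. \<exists>y\<in>tri f. col x \<noteq> col y"
    proof (rule ccontr)
      assume "\<not> ?thesis"
      then have allc: "\<forall>x\<in>tri f. \<forall>y\<in>tri f. col x = col y" by blast
      obtain a where a: "a \<in> tri f" using fNE[OF fF(1)] by blast
      have TV: "tri f \<subseteq> V" using su(5) fF(1) by blast
      have "tri f \<subseteq> M1 \<or> tri f \<subseteq> M2 \<or> tri f \<subseteq> M3"
      proof -
        have ca: "col a = 1 \<or> col a = 2 \<or> col a = 3" by (simp add: col_def)
        have cx: "col x = col a" "x \<in> V" if "x \<in> tri f" for x using allc a that TV by blast+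
        have "(\<forall>x\<in>tri f. x \<in> M1) \<or> (\<forall>x\<in>tri f. x \<in> M2) \<or> (\<forall>x\<in>tri f. x \<in> M3)"
        proof (rule disjE[OF ca])
          assume "col a = 1" then show ?thesis using cx colM by simp
        next
          assume "col a = 2 \<or> col a = 3"
          then show ?thesis
          proof
            assume "col a = 2" then show ?thesis using cx colM by simp
          next
            assume "col a = 3" then show ?thesis using cx colM by simp
          qed
        qed
        then show ?thesis by blast
      qed
      then show False using fF by (auto simp: Fm_def)
    qed
    then obtain x y where "x \<in> tri f" "y \<in> tri f" "col x \<noteq> col y" by blast
    moreover have "card (tri f) = 3" using su(5) fF(1) by blast
    ultimately show ?thesis using face_count2[OF _ finN Nprop[OF fF(1)]] by blast
  qed
  have ftn: "Ft \<subseteq> Fn"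
  proof
    fix f assume f: "f \<in> Ft"
    then obtain a b c where "a \<in> tri f" "b \<in> tri f" "c \<in> tri f" "a \<in> M1" "b \<in> M2" "c \<in> M3"
      using Ft(2) by blast
    then have "f \<notin> Fm" using disj by (auto simp: Fm_def)
    then show "f \<in> Fn" using f Ft(1) by (auto simp: Fn_def)
  qed
  have ft3: "card {e \<in> Eb. e \<subseteq> tri f} \<ge> 3" if f: "f \<in> Ft" for f
  proof -
    obtain a b c where abc: "a \<in> tri f" "b \<in> tri f" "c \<in> tri f" "a \<in> M1" "b \<in> M2" "c \<in> M3"
      using Ft(2) f by blast
    have "col a = 1" "col b = 2" "col c = 3" using abc colM MV by blast+
    then show ?thesis using face_count3[OF finN Nprop, of f a b c] abc f Ft(1) by auto
  qed
  have dc: "(\<Sum>e\<in>Eb. card {f \<in> Fc. e \<subseteq> tri f}) = (\<Sum>f\<in>Fc. card {e \<in> Eb. e \<subseteq> tri f})"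
    using sum_card_swap[of Eb Fc "\<lambda>e f. e \<subseteq> tri f"] finE su(2) by (simp add: Eb_def)
  have lhs: "(\<Sum>e\<in>Eb. card {f \<in> Fc. e \<subseteq> tri f}) = 2 * card Eb"
  proof -
    have "(\<Sum>e\<in>Eb. card {f \<in> Fc. e \<subseteq> tri f}) = (\<Sum>e\<in>Eb. 2)"
      using su(6) by (intro sum.cong) (auto simp: Eb_def)
    then show ?thesis by simp
  qed
  have r1: "(\<Sum>f\<in>Fn. card {e \<in> Eb. e \<subseteq> tri f}) \<le> (\<Sum>f\<in>Fc. card {e \<in> Eb. e \<subseteq> tri f})"
    by (rule sum_mono2) (use su(2) in \<open>auto simp: Fn_def\<close>)
  have r2: "(\<Sum>f\<in>Fn. 2 + (if f \<in> Ft then 1 else 0)) \<le> (\<Sum>f\<in>Fn. card {e \<in> Eb. e \<subseteq> tri f})"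
  proof (rule sum_mono)
    fix f assume f: "f \<in> Fn"
    show "2 + (if f \<in> Ft then 1 else 0) \<le> card {e \<in> Eb. e \<subseteq> tri f}"
      using fn2[OF f] ft3 by (cases "f \<in> Ft") auto
  qed
  have r3: "(\<Sum>f\<in>Fn. 2 + (if f \<in> Ft then 1 else (0::nat))) = 2 * card Fn + card Ft"
  proof -
    have finFn: "finite Fn" using su(2) by (simp add: Fn_def)
    have "(\<Sum>f\<in>Fn. (if f \<in> Ft then 1 else (0::nat))) = card {f \<in> Fn. f \<in> Ft}"
      using card_filter_sum[OF finFn, of "\<lambda>f. f \<in> Ft"] by simp
    also have "{f \<in> Fn. f \<in> Ft} = Ft" using ftn by blast
    finally have ind: "(\<Sum>f\<in>Fn. (if f \<in> Ft then 1 else (0::nat))) = card Ft" .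
    have "(\<Sum>f\<in>Fn. 2 + (if f \<in> Ft then 1 else (0::nat))) = (\<Sum>f\<in>Fn. 2) + (\<Sum>f\<in>Fn. if f \<in> Ft then 1 else (0::nat))"
      by (rule sum.distrib)
    also have "\<dots> = 2 * card Fn + card Ft" using ind by simp
    finally show ?thesis .
  qed
  have key: "2 * card Fn + card Ft \<le> 2 * card Eb" using dc lhs r1 r2 r3 by linarith
  have eul: "int (card V) - int (card E) + int (card Fc) = 2" using su(9) .
  show ?thesis using key eul cE cEm cF cFm cV i1 i2 i3 by linarith
qed



theorem lemma4p8:
  fixes V :: "'v set" and E :: "'v set set" and Fc :: "'f set" and tri :: "'f \<Rightarrow> 'v set"
    and w :: "'v set \<Rightarrow> real" and loc :: "'o \<Rightarrow> 'v set" and rad :: "'o \<Rightarrow> real"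
    and p1 p2 p3 :: 'o
  assumes "sphere_triangulation V E Fc tri"
    and "\<forall>e\<in>E. w e > 0"
    and "p1 \<noteq> p2" and "p1 \<noteq> p3" and "p2 \<noteq> p3"
    and "\<forall>p\<in>{p1, p2, p3}. is_object V E loc rad p"
    and "standing_assumption V E w rad {p1, p2, p3}"
    and "normal_family V E w loc rad {p1, p2, p3}"
  shows "card {f \<in> Fc. type1_singular V E w loc rad {p1, p2, p3} tri f} \<le> 2"
proof -
  note su = st_unfold[OF assms(1)]
  have objs: "\<forall>p\<in>{p1,p2,p3}. loc p \<noteq> {} \<and> loc p \<subseteq> V \<and> induced_connected E (loc p)"
    using assms(6) unfolding is_object_def by blast
  interpret vs: vset V E w loc rad "{p1,p2,p3}"
    using su(1) su(8) assms(2) objs assms(7) assms(8) by unfold_locales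
  let ?M = "voronoi V E w loc rad {p1,p2,p3}"
  have MV: "?M p \<subseteq> V" for p by (auto simp: vs.vor_iff)
  have cov: "V \<subseteq> ?M p1 \<union> ?M p2 \<union> ?M p3" using vs.vor_cover3[OF refl] by blast
  have d12: "?M p1 \<inter> ?M p2 = {}" using vs.vor_disj[of p1 p2] assms(3) by blast
  have d13: "?M p1 \<inter> ?M p3 = {}" using vs.vor_disj[of p1 p3] assms(4) by blast
  have d23: "?M p2 \<inter> ?M p3 = {}" using vs.vor_disj[of p2 p3] assms(5) by blast
  have cn: "\<forall>x\<in>?M p. \<forall>y\<in>?M p. (RR (?M p) E)\<^sup>*\<^sup>* x y" if "p \<in> {p1,p2,p3}" for p
    using vs.vor_conn[OF that] by blast
  have t1: "\<exists>a\<in>tri f. \<exists>b\<in>tri f. \<exists>c\<in>tri f. a \<in> ?M p1 \<and> b \<in> ?M p2 \<and> c \<in> ?M p3"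
    if f: "f \<in> {f \<in> Fc. type1_singular V E w loc rad {p1, p2, p3} tri f}" for f
  proof -
    obtain q1 q2 q3 where q: "q1 \<in> {p1,p2,p3}" "q2 \<in> {p1,p2,p3}" "q3 \<in> {p1,p2,p3}"
      "q1 \<noteq> q2" "q1 \<noteq> q3" "q2 \<noteq> q3"
      and m: "\<exists>a\<in>tri f. a \<in> ?M q1" "\<exists>a\<in>tri f. a \<in> ?M q2" "\<exists>a\<in>tri f. a \<in> ?M q3"
      using f unfolding type1_singular_def meet_at_def by blast
    have P: "\<exists>a\<in>tri f. a \<in> ?M p" if "p \<in> {q1,q2,q3}" for p
      using that m by blast
    show ?thesis using P[OF pigeon3(1)[OF q]] P[OF pigeon3(2)[OF q]] P[OF pigeon3(3)[OF q]] by blast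
  qed
  show ?thesis
    by (rule count_main[OF assms(1) MV MV MV cov d12 d13 d23 cn cn cn]) (use t1 in auto)
qed


end
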